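(* Let $c^{(k)}=(u^{(k)},n_1^{(k)},n_2^{(k)})$ and $c=(u,n_1,n_2)$ be admissible controls on $[0,T]$, let $\rho^{(k)},\rho$ be the solutions of the master equation (GKSL) with controls $c^{(k)}$, $c$ respectively, and let $\chi^{(k)},\chi$ be the solutions of the adjoint system with controls $c^{(k)}$, $c$ respectively. Then the following exact identities hold: $$J_1(c)-J_1(c^{(k)})=\int_0^T\big\langle \mathcal K^c(\chi^{(k)}(t),\rho(t)),\,c(t)-c^{(k)}(t)\big\rangle_{\mathbb R^3}\,dt,$$ $$J_1(c)-J_1(c^{(k)})=\int_0^T\big\langle \mathcal K^c(\chi(t),\rho^{(k)}(t)),\,c(t)-c^{(k)}(t)\big\rangle_{\mathbb R^3}\,dt .$$
   Context: Let $\sigma_x,\sigma_y,\sigma_z$ be the Pauli matrices, $\mathbb I_2,\mathbb I_4$ identity matrices, $\sigma^+=\begin{pmatrix}0&0\\1&0\end{pmatrix}$, $\sigma^-=\begin{pmatrix}0&1\\0&0\end{pmatrix}$, $\sigma_1^\pm=\sigma^\pm\otimes\mathbb I_2$, $\sigma_2^\pm=\mathbb I_2\otimes\sigma^\pm$, $W_1=\sigma_z\otimes\mathbb I_2$, $W_2=\mathbb I_2\otimes\sigma_z$. Fix parameters $\varepsilon,\omega_j,\Lambda_j,\Omega_j>0$ ($j=1,2$), $H_0=\frac{\omega_1}{2}W_1+\frac{\omega_2}{2}W_2$, and a Hermitian $4\times4$ matrix $V$ (in the paper $V=Q_1\otimes\mathbb I_2+\mathbb I_2\otimes Q_2$ or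 $V=Q_1\otimes Q_2$ with $Q_j=\sin\theta_j\cos\varphi_j\sigma_x+\sin\theta_j\sin\varphi_j\sigma_y+\cos\theta_j\sigma_z$). For $c=(u,n_1,n_2)\in\mathbb R^3$ let $H_c=H_0+\varepsilon\sum_{j=1}^2\Lambda_j n_jW_j+uV$ and $$\mathcal L^D_n(\rho)=\sum_{j=1}^2\Big[\Omega_j(n_j+1)\big(2\sigma_j^-\rho\sigma_j^+-\{\sigma_j^+\sigma_j^-,\rho\}\big)+\Omega_jn_j\big(2\sigma_j^+\rho\sigma_j^--\{\sigma_j^-\sigma_j^+,\rho\}\big)\Big],$$ $$\mathcal L^{D,\dagger}_n(\chi)=\sum_{j=1}^2\Big[\Omega_j(n_j+1)\big(2\sigma_j^+\chi\sigma_j^--\{\sigma_j^+\sigma_j^-,\chi\}\big)+\Omega_jn_j\big(2\sigma_j^-\chi\sigma_j^+-\{\sigma_j^-\sigma_j^+,\chi\}\big)\Big],$$ where $\{A,B\}=AB+BA$, $[A,B]=AB-BA$. Fix $T>0$, $\mu,n_{\max}>0$, $Q=[-\mu,\mu]\times[0,n_{\max}]^2$; admissible controls are piecewise continuous $c=(u,n_1,n_2):[0,T]\to Q$. Fix density matrices $\rho_0,\rho_{\rm target}$ ($4\times 4$, positive semidefinite, trace one). The master equation is $\dot\rho(t)=-i[H_{c(t)},\rho(t)]+\varepsilon\mathcal L^D_{n(t)}(\rho(t))$, $\rho(0)=\rho_0$; the adjoint system is $\dot\chi(t)=-i[H_{c(t)},\chi(t)]-\varepsilon\mathcal L^{D,\dagger}_{n(t)}(\chi(t))$,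 $\chi(T)=\rho_{\rm target}$ (solved backward). For matrices, $\langle A,B\rangle={\rm Tr}(A^\dagger B)$. The objective is $J_1(c)={\rm Tr}(\rho(T)\rho_{\rm target})$ where $\rho$ solves the master equation with control $c$. The switching functions $\mathcal K^c=(\mathcal K^u,\mathcal K^{n_1},\mathcal K^{n_2})$ are the coefficients of $u,n_1,n_2$ in $\langle\chi,-i[H_c,\rho]+\varepsilon\mathcal L^D_n(\rho)\rangle$: $\mathcal K^u(\chi,\rho)=\langle\chi,-i[V,\rho]\rangle$, $\mathcal K^{n_j}(\chi,\rho)=\big\langle\chi,-i\varepsilon\Lambda_j[W_j,\rho]+\varepsilon\Omega_j\big(2\sigma_j^-\rho\sigma_j^++2\sigma_j^+\rho\sigma_j^--2\rho\big)\big\rangle$, $j=1,2$ (real for Hermitian $\chi,\rho$). *)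

theory Defs
  imports "HOL-Analysis.Analysis"
begin

text \<open>4x4 (and 2x2) complex matrices are modelled as complex^n^n.
  Index convention for the Kronecker product: basis index 0,1,2,3 of C^4 corresponds to
  pairs (0,0),(0,1),(1,0),(1,1) of C^2 (x) C^2.\<close>

type_synonym mat2 = "complex^2^2"
type_synonym mat4 = "complex^4^4"

definition kron_hi :: "4 \<Rightarrow> 2" where
  "kron_hi i = (if i = 0 \<or> i = 1 then 0 else 1)"
definition kron_lo :: "4 \<Rightarrow> 2" where
  "kron_lo i = (if i = 0 \<or> i = 2 then 0 else 1)"

definition kron :: "mat2 \<Rightarrow> mat2 \<Rightarrow> mat4" where
  "kron A B = (\<chi> i j. A $ kron_hi i $ kron_hi j * B $ kron_lo i $ kron_lo j)"

definition id2 :: mat2 where "id2 = mat 1"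
definition sigma_z :: mat2 where
  "sigma_z = (\<chi> i j. if i = j then (if i = 0 then 1 else -1) else 0)"
definition sigma_plus :: mat2 where
  "sigma_plus = (\<chi> i j. if i = 1 \<and> j = 0 then 1 else 0)"
definition sigma_minus :: mat2 where
  "sigma_minus = (\<chi> i j. if i = 0 \<and> j = 1 then 1 else 0)"

definition sp1 :: mat4 where "sp1 = kron sigma_plus id2"
definition sm1 :: mat4 where "sm1 = kron sigma_minus id2"
definition sp2 :: mat4 where "sp2 = kron id2 sigma_plus"
definition sm2 :: mat4 where "sm2 = kron id2 sigma_minus"
definition W1 :: mat4 where "W1 = kron sigma_z id2"
definition W2 :: mat4 where "W2 = kron id2 sigma_z"

definition cscale :: "complex \<Rightarrow> mat4 \<Rightarrow> mat4" where
  "cscale c A = (\<chi> i j. c * A $ i $ j)"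

definition adjoint_mat :: "mat4 \<Rightarrow> mat4" where
  "adjoint_mat A = (\<chi> i j. cnj (A $ j $ i))"

definition mtrace :: "mat4 \<Rightarrow> complex" where
  "mtrace A = (\<Sum>i\<in>UNIV. A $ i $ i)"

definition hs_inner :: "mat4 \<Rightarrow> mat4 \<Rightarrow> complex" where
  "hs_inner A B = mtrace (adjoint_mat A ** B)"

definition hermitian4 :: "mat4 \<Rightarrow> bool" where
  "hermitian4 A \<longleftrightarrow> adjoint_mat A = A"

definition psd4 :: "mat4 \<Rightarrow> bool" where
  "psd4 A \<longleftrightarrow> (\<forall>x::complex^4. let q = (\<Sum>i\<in>UNIV. cnj (x $ i) * (A *v x) $ i)
                                    in Im q = 0 \<and> Re q \<ge> 0)"

definition density4 :: "mat4 \<Rightarrow> bool" where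
  "density4 A \<longleftrightarrow> hermitian4 A \<and> psd4 A \<and> mtrace A = 1"

definition comm :: "mat4 \<Rightarrow> mat4 \<Rightarrow> mat4" where
  "comm A B = A ** B - B ** A"
definition acomm :: "mat4 \<Rightarrow> mat4 \<Rightarrow> mat4" where
  "acomm A B = A ** B + B ** A"

definition Ham :: "real \<Rightarrow> real \<Rightarrow> real \<Rightarrow> real \<Rightarrow> real \<Rightarrow> mat4
                   \<Rightarrow> real \<Rightarrow> real \<Rightarrow> real \<Rightarrow> mat4" where
  "Ham eps w1 w2 L1 L2 V u n1 n2 =
     (w1/2) *\<^sub>R W1 + (w2/2) *\<^sub>R W2
     + (eps * L1 * n1) *\<^sub>R W1 + (eps * L2 * n2) *\<^sub>R W2 + u *\<^sub>R V"

definition LD :: "real \<Rightarrow> real \<Rightarrow> real \<Rightarrow> real \<Rightarrow> mat4 \<Rightarrow> mat4" where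
  "LD O1 O2 n1 n2 r =
     (O1 * (n1 + 1)) *\<^sub>R (2 *\<^sub>R (sm1 ** r ** sp1) - acomm (sp1 ** sm1) r)
   + (O1 * n1) *\<^sub>R (2 *\<^sub>R (sp1 ** r ** sm1) - acomm (sm1 ** sp1) r)
   + (O2 * (n2 + 1)) *\<^sub>R (2 *\<^sub>R (sm2 ** r ** sp2) - acomm (sp2 ** sm2) r)
   + (O2 * n2) *\<^sub>R (2 *\<^sub>R (sp2 ** r ** sm2) - acomm (sm2 ** sp2) r)"

definition LD_adj :: "real \<Rightarrow> real \<Rightarrow> real \<Rightarrow> real \<Rightarrow> mat4 \<Rightarrow> mat4" where
  "LD_adj O1 O2 n1 n2 x =
     (O1 * (n1 + 1)) *\<^sub>R (2 *\<^sub>R (sp1 ** x ** sm1) - acomm (sp1 ** sm1) x)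
   + (O1 * n1) *\<^sub>R (2 *\<^sub>R (sm1 ** x ** sp1) - acomm (sm1 ** sp1) x)
   + (O2 * (n2 + 1)) *\<^sub>R (2 *\<^sub>R (sp2 ** x ** sm2) - acomm (sp2 ** sm2) x)
   + (O2 * n2) *\<^sub>R (2 *\<^sub>R (sm2 ** x ** sp2) - acomm (sm2 ** sp2) x)"

definition master_rhs where
  "master_rhs eps w1 w2 L1 L2 O1 O2 V u n1 n2 r =
     cscale (-\<i>) (comm (Ham eps w1 w2 L1 L2 V u n1 n2) r) + eps *\<^sub>R LD O1 O2 n1 n2 r"

definition adjoint_rhs where
  "adjoint_rhs eps w1 w2 L1 L2 O1 O2 V u n1 n2 x =
     cscale (-\<i>) (comm (Ham eps w1 w2 L1 L2 V u n1 n2) x) - eps *\<^sub>R LD_adj O1 O2 n1 n2 x"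

definition piecewise_continuous_on ::
  "real \<Rightarrow> (real \<Rightarrow> 'a::topological_space) \<Rightarrow> bool" where
  "piecewise_continuous_on T f \<longleftrightarrow>
     (\<exists>S. finite S \<and> S \<subseteq> {0..T} \<and> continuous_on ({0..T} - S) f \<and>
          (\<forall>s\<in>S. (s > 0 \<longrightarrow> (\<exists>l. (f \<longlongrightarrow> l) (at_left s))) \<and>
                  (s < T \<longrightarrow> (\<exists>l. (f \<longlongrightarrow> l) (at_right s)))))"

definition admissible ::
  "real \<Rightarrow> real \<Rightarrow> real \<Rightarrow> (real \<Rightarrow> real) \<Rightarrow> (real \<Rightarrow> real) \<Rightarrow> (real \<Rightarrow> real) \<Rightarrow> bool" where
  "admissible T mu nmax u n1 n2 \<longleftrightarrow>
     piecewise_continuous_on T (\<lambda>t. (u t, n1 t, n2 t)) \<and>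
     (\<forall>t\<in>{0..T}. u t \<in> {-mu..mu} \<and> n1 t \<in> {0..nmax} \<and> n2 t \<in> {0..nmax})"

definition master_solution where
  "master_solution eps w1 w2 L1 L2 O1 O2 V T u n1 n2 r0 r \<longleftrightarrow>
     continuous_on {0..T} r \<and> r 0 = r0 \<and>
     (\<exists>S. finite S \<and> (\<forall>t\<in>{0..T} - S.
        (r has_vector_derivative
           master_rhs eps w1 w2 L1 L2 O1 O2 V (u t) (n1 t) (n2 t) (r t)) (at t within {0..T})))"

definition adjoint_solution where
  "adjoint_solution eps w1 w2 L1 L2 O1 O2 V T u n1 n2 rtarget x \<longleftrightarrow>
     continuous_on {0..T} x \<and> x T = rtarget \<and>
     (\<exists>S. finite S \<and> (\<forall>t\<in>{0..T} - S.
        (x has_vector_derivative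
           adjoint_rhs eps w1 w2 L1 L2 O1 O2 V (u t) (n1 t) (n2 t) (x t)) (at t within {0..T})))"

text \<open>Objective J_1(c) = Tr(rho(T) rho_target), expressed through the trajectory.\<close>
definition J1_of :: "real \<Rightarrow> (real \<Rightarrow> mat4) \<Rightarrow> mat4 \<Rightarrow> complex" where
  "J1_of T r rtarget = mtrace (r T ** rtarget)"

definition K_u :: "mat4 \<Rightarrow> mat4 \<Rightarrow> mat4 \<Rightarrow> complex" where
  "K_u V x r = hs_inner x (cscale (-\<i>) (comm V r))"

definition K_n :: "real \<Rightarrow> real \<Rightarrow> real \<Rightarrow> mat4 \<Rightarrow> mat4 \<Rightarrow> mat4 \<Rightarrow> mat4 \<Rightarrow> mat4 \<Rightarrow> complex" where
  "K_n eps L Om W sm sp x r =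
     hs_inner x (cscale (-\<i> * of_real (eps * L)) (comm W r)
       + (eps * Om) *\<^sub>R (2 *\<^sub>R (sm ** r ** sp) + 2 *\<^sub>R (sp ** r ** sm) - 2 *\<^sub>R r))"

text \<open>Euclidean pairing <K^c(x,r), c - c'> in R^3 (components u, n_1, n_2).\<close>
definition K_pair where
  "K_pair eps L1 L2 O1 O2 V x r du dn1 dn2 =
     K_u V x r * of_real du
   + K_n eps L1 O1 W1 sm1 sp1 x r * of_real dn1
   + K_n eps L2 O2 W2 sm2 sp2 x r * of_real dn2"

end

theory Submission imports Defs begin


lemma mm_nth: "(A ** B) $ i $ j = (\<Sum>k\<in>UNIV. A $ i $ k * B $ k $ j)"
  by (simp add: matrix_matrix_mult_def)

lemma adj_nth[simp]: "adjoint_mat A $ i $ j = cnj (A $ j $ i)"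
  by (simp add: adjoint_mat_def)
lemma cscale_nth[simp]: "cscale c A $ i $ j = c * A $ i $ j"
  by (simp add: cscale_def)

lemma scaleR_nth[simp]: "(c *\<^sub>R (A::mat4)) $ i $ j = of_real c * A $ i $ j"
  unfolding vector_scaleR_component by (simp add: scaleR_conv_of_real)

declare vector_scaleR_component[simp del]
lemma mm_scaleR_left[simp]: "(c *\<^sub>R (A::mat4)) ** (B::mat4) = c *\<^sub>R (A ** B)"
  by (simp add: vec_eq_iff mm_nth sum_distrib_left mult.assoc)
lemma mm_scaleR_right[simp]: "(A::mat4) ** (c *\<^sub>R (B::mat4)) = c *\<^sub>R (A ** B)"
  by (simp add: vec_eq_iff mm_nth sum_distrib_left ac_simps)
lemma mm_cscale_left[simp]: "(cscale c (A::mat4)) ** (B::mat4) = cscale c (A ** B)"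
  by (simp add: vec_eq_iff mm_nth sum_distrib_left mult.assoc)
lemma mm_cscale_right[simp]: "(A::mat4) ** (cscale c (B::mat4)) = cscale c (A ** B)"
  by (simp add: vec_eq_iff mm_nth sum_distrib_left ac_simps)
lemma mm_add_left[simp]: "((A::mat4) + B) ** (C::mat4) = A ** C + B ** C"
  by (simp add: vec_eq_iff mm_nth sum.distrib distrib_right)
lemma mm_add_right[simp]: "(A::mat4) ** (B + C) = A ** B + A ** C"
  by (simp add: vec_eq_iff mm_nth sum.distrib distrib_left)
lemma mm_diff_left[simp]: "((A::mat4) - B) ** (C::mat4) = A ** C - B ** C"
  by (simp add: vec_eq_iff mm_nth sum_subtractf left_diff_distrib)
lemma mm_diff_right[simp]: "(A::mat4) ** (B - C) = A ** B - A ** C"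
  by (simp add: vec_eq_iff mm_nth sum_subtractf right_diff_distrib)

lemma adj_add[simp]: "adjoint_mat (A + B) = adjoint_mat A + adjoint_mat B"
  by (simp add: vec_eq_iff)
lemma adj_diff[simp]: "adjoint_mat (A - B) = adjoint_mat A - adjoint_mat B"
  by (simp add: vec_eq_iff)
lemma adj_scaleR[simp]: "adjoint_mat (c *\<^sub>R A) = c *\<^sub>R adjoint_mat A"
  by (simp add: vec_eq_iff)
lemma adj_cscale[simp]: "adjoint_mat (cscale c A) = cscale (cnj c) (adjoint_mat A)"
  by (simp add: vec_eq_iff)
lemma adj_mm[simp]: "adjoint_mat (A ** B) = adjoint_mat B ** adjoint_mat A"
  by (simp add: vec_eq_iff mm_nth ac_simps)
lemma adj_adj[simp]: "adjoint_mat (adjoint_mat A) = A"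
  by (simp add: vec_eq_iff)

lemma mtrace_add[simp]: "mtrace (A + B) = mtrace A + mtrace B"
  by (simp add: mtrace_def sum.distrib)
lemma mtrace_diff[simp]: "mtrace (A - B) = mtrace A - mtrace B"
  by (simp add: mtrace_def sum_subtractf)
lemma mtrace_scaleR[simp]: "mtrace (c *\<^sub>R A) = of_real c * mtrace A"
  by (simp add: mtrace_def sum_distrib_left)
lemma mtrace_cscale[simp]: "mtrace (cscale c A) = c * mtrace A"
  by (simp add: mtrace_def sum_distrib_left)
lemma mtrace_comm: "mtrace (A ** B) = mtrace (B ** A)"
  unfolding mtrace_def mm_nth by (subst sum.swap) (simp add: ac_simps)

lemma hs_add1[simp]: "hs_inner (A + B) C = hs_inner A C + hs_inner B C"
  by (simp add: hs_inner_def)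
lemma hs_add2[simp]: "hs_inner C (A + B) = hs_inner C A + hs_inner C B"
  by (simp add: hs_inner_def)
lemma hs_diff1[simp]: "hs_inner (A - B) C = hs_inner A C - hs_inner B C"
  by (simp add: hs_inner_def)
lemma hs_diff2[simp]: "hs_inner C (A - B) = hs_inner C A - hs_inner C B"
  by (simp add: hs_inner_def)
lemma hs_scaleR1[simp]: "hs_inner (c *\<^sub>R A) C = of_real c * hs_inner A C"
  by (simp add: hs_inner_def)
lemma hs_scaleR2[simp]: "hs_inner C (c *\<^sub>R A) = of_real c * hs_inner C A"
  by (simp add: hs_inner_def)
lemma hs_cscale1[simp]: "hs_inner (cscale c A) C = cnj c * hs_inner A C"
  by (simp add: hs_inner_def)
lemma hs_cscale2[simp]: "hs_inner C (cscale c A) = c * hs_inner C A"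
  by (simp add: hs_inner_def)

lemma hsL: "hs_inner X (A ** R) = hs_inner (adjoint_mat A ** X) R"
  by (simp add: hs_inner_def matrix_mul_assoc)
lemma hsR: "hs_inner X (R ** A) = hs_inner (X ** adjoint_mat A) R"
  unfolding hs_inner_def adj_mm adj_adj
  by (metis matrix_mul_assoc mtrace_comm)

lemma kr: "kron_hi 1 = 0" "kron_hi 2 = 1" "kron_hi 3 = 1" "kron_hi 4 = 0"
  "kron_lo 1 = 1" "kron_lo 2 = 0" "kron_lo 3 = 1" "kron_lo 4 = 0"
  by (simp_all add: kron_hi_def kron_lo_def)

lemma kron_adj: "adjoint_mat (kron A B) = kron (\<chi> i j. cnj (A $ j $ i)) (\<chi> i j. cnj (B $ j $ i))"
  by (simp add: vec_eq_iff kron_def)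

lemma adj_consts[simp]: "adjoint_mat sp1 = sm1" "adjoint_mat sm1 = sp1"
  "adjoint_mat sp2 = sm2" "adjoint_mat sm2 = sp2"
  "adjoint_mat W1 = W1" "adjoint_mat W2 = W2"
  unfolding sp1_def sm1_def sp2_def sm2_def W1_def W2_def
  by (simp_all add: vec_eq_iff forall_4 kron_def kr id2_def mat_def
     sigma_plus_def sigma_minus_def sigma_z_def)


lemma s1: "sum f (UNIV::4 set) = f 1 + f 2 + f 3 + f 4"
  unfolding UNIV_4 apply (subst sum.insert, simp, simp)+ by (simp add: ac_simps)
lemma sid1: "sm1 ** sp1 = mat 1 - sp1 ** sm1"
  unfolding sp1_def sm1_def
  by (simp add: vec_eq_iff forall_4 kron_def kr id2_def mat_def mm_nth s1
     sigma_plus_def sigma_minus_def)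
lemma sid2: "sm2 ** sp2 = mat 1 - sp2 ** sm2"
  unfolding sp2_def sm2_def
  by (simp add: vec_eq_iff forall_4 kron_def kr id2_def mat_def mm_nth s1
     sigma_plus_def sigma_minus_def)
lemmas hsLs = hsL[of _ W1] hsL[of _ W2] hsL[of _ sp1] hsL[of _ sm1]
  hsL[of _ sp2] hsL[of _ sm2] hsL[of _ "sp1 ** sm1"] hsL[of _ "sm1 ** sp1"]
  hsL[of _ "sp2 ** sm2"] hsL[of _ "sm2 ** sp2"]
lemmas hsRs = hsR[of _ _ W1] hsR[of _ _ W2] hsR[of _ _ sp1] hsR[of _ _ sm1]
  hsR[of _ _ sp2] hsR[of _ _ sm2] hsR[of _ _ "sp1 ** sm1"] hsR[of _ _ "sm1 ** sp1"]
  hsR[of _ _ "sp2 ** sm2"] hsR[of _ _ "sm2 ** sp2"]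

lemma adj_identity:
  assumes "hermitian4 V"
  shows "hs_inner (adjoint_rhs eps w1 w2 L1 L2 O1 O2 V u n1 n2 X) R
       = - hs_inner X (master_rhs eps w1 w2 L1 L2 O1 O2 V u n1 n2 R)"
proof -
  have hV[simp]: "adjoint_mat V = V" using assms by (simp add: hermitian4_def)
  show ?thesis
    unfolding adjoint_rhs_def master_rhs_def LD_def LD_adj_def Ham_def comm_def acomm_def
    by (simp add: hsLs hsRs hsL[of _ V] hsR[of _ _ V] matrix_mul_assoc)
qed


lemma times2: "(R::mat4) * 2 = (2::real) *\<^sub>R R"
  by (simp add: vec_eq_iff)
lemma hs_times2[simp]: "hs_inner X ((R::mat4) * 2) = 2 * hs_inner X R"
  unfolding times2 by simp

lemma K_identity:
  shows "hs_inner X (master_rhs eps w1 w2 L1 L2 O1 O2 V u n1 n2 R)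
     - hs_inner X (master_rhs eps w1 w2 L1 L2 O1 O2 V u' n1' n2' R)
     = K_pair eps L1 L2 O1 O2 V X R (u - u') (n1 - n1') (n2 - n2')"
  unfolding master_rhs_def LD_def Ham_def comm_def acomm_def K_pair_def K_u_def K_n_def
  by (simp add: sid1 sid2 matrix_mul_assoc algebra_simps)

lemma hs_bilinear: "bounded_bilinear hs_inner"
proof -
  have "bilinear hs_inner"
    unfolding bilinear_def
    by (auto intro!: linearI simp: scaleR_conv_of_real[where 'a=complex])
  thus ?thesis by (simp add: bilinear_conv_bounded_bilinear)
qed

lemma ftc:
  assumes "hermitian4 V" "T > 0"
    and ms: "master_solution eps w1 w2 L1 L2 O1 O2 V T u n1 n2 r0 R"
    and as: "adjoint_solution eps w1 w2 L1 L2 O1 O2 V T u' n1' n2' rt X"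
  shows "((\<lambda>t. K_pair eps L1 L2 O1 O2 V (X t) (R t) (u t - u' t) (n1 t - n1' t) (n2 t - n2' t))
     has_integral (hs_inner (X T) (R T) - hs_inner (X 0) (R 0))) {0..T}"
proof -
  obtain S1 where S1: "finite S1" "\<forall>t\<in>{0..T} - S1.
        (R has_vector_derivative
           master_rhs eps w1 w2 L1 L2 O1 O2 V (u t) (n1 t) (n2 t) (R t)) (at t within {0..T})"
    using ms unfolding master_solution_def by blast
  obtain S2 where S2: "finite S2" "\<forall>t\<in>{0..T} - S2.
        (X has_vector_derivative
           adjoint_rhs eps w1 w2 L1 L2 O1 O2 V (u' t) (n1' t) (n2' t) (X t)) (at t within {0..T})"
    using as unfolding adjoint_solution_def by blast
  have cR: "continuous_on {0..T} R" using ms unfolding master_solution_def by blast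
  have cX: "continuous_on {0..T} X" using as unfolding adjoint_solution_def by blast
  show ?thesis
  proof (rule fundamental_theorem_of_calculus_interior_strong[where S="S1 \<union> S2"])
    show "finite (S1 \<union> S2)" using S1 S2 by simp
    show "0 \<le> T" using assms by simp
    show "continuous_on {0..T} (\<lambda>t. hs_inner (X t) (R t))"
      by (rule bounded_bilinear.continuous_on[OF hs_bilinear cX cR])
  next
    fix t assume t: "t \<in> {0<..<T} - (S1 \<union> S2)"
    have at: "at t within {0..T} = at t"
      using t by (intro at_within_interior) auto
    have dR: "(R has_vector_derivative
           master_rhs eps w1 w2 L1 L2 O1 O2 V (u t) (n1 t) (n2 t) (R t)) (at t)"
    proof -
      have "t \<in> {0..T} - S1" using t by auto
      with S1(2) have "(R has_vector_derivative
           master_rhs eps w1 w2 L1 L2 O1 O2 V (u t) (n1 t) (n2 t) (R t)) (at t within {0..T})" by blast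
      thus ?thesis unfolding at .
    qed
    have dX: "(X has_vector_derivative
           adjoint_rhs eps w1 w2 L1 L2 O1 O2 V (u' t) (n1' t) (n2' t) (X t)) (at t)"
    proof -
      have "t \<in> {0..T} - S2" using t by auto
      with S2(2) have "(X has_vector_derivative
           adjoint_rhs eps w1 w2 L1 L2 O1 O2 V (u' t) (n1' t) (n2' t) (X t)) (at t within {0..T})" by blast
      thus ?thesis unfolding at .
    qed
    have "((\<lambda>t. hs_inner (X t) (R t)) has_vector_derivative
        (hs_inner (X t) (master_rhs eps w1 w2 L1 L2 O1 O2 V (u t) (n1 t) (n2 t) (R t))
         + hs_inner (adjoint_rhs eps w1 w2 L1 L2 O1 O2 V (u' t) (n1' t) (n2' t) (X t)) (R t))) (at t)"
      by (rule bounded_bilinear.has_vector_derivative[OF hs_bilinear dX dR])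
    moreover have "hs_inner (X t) (master_rhs eps w1 w2 L1 L2 O1 O2 V (u t) (n1 t) (n2 t) (R t))
         + hs_inner (adjoint_rhs eps w1 w2 L1 L2 O1 O2 V (u' t) (n1' t) (n2' t) (X t)) (R t)
       = K_pair eps L1 L2 O1 O2 V (X t) (R t) (u t - u' t) (n1 t - n1' t) (n2 t - n2' t)"
      using K_identity[of "X t" eps w1 w2 L1 L2 O1 O2 V "u t" "n1 t" "n2 t" "R t" "u' t" "n1' t" "n2' t"]
      by (simp only: adj_identity[OF assms(1)] diff_conv_add_uminus)
    ultimately show "((\<lambda>t. hs_inner (X t) (R t)) has_vector_derivative
        K_pair eps L1 L2 O1 O2 V (X t) (R t) (u t - u' t) (n1 t - n1' t) (n2 t - n2' t)) (at t)"
      by simp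
  qed
qed

lemma hs_target: "hermitian4 A \<Longrightarrow> hs_inner A B = mtrace (B ** A)"
  unfolding hs_inner_def hermitian4_def by (simp add: mtrace_comm)

theorem mainTheorem1:
  fixes eps w1 w2 L1 L2 O1 O2 T mu nmax :: real
    and V r0 rtarget :: mat4
    and u n1 n2 uk n1k n2k :: "real \<Rightarrow> real"
    and r rk x xk :: "real \<Rightarrow> mat4"
  assumes "eps > 0" "w1 > 0" "w2 > 0" "L1 > 0" "L2 > 0" "O1 > 0" "O2 > 0"
    and "hermitian4 V"
    and "T > 0" "mu > 0" "nmax > 0"
    and "density4 r0" "density4 rtarget"
    and "admissible T mu nmax uk n1k n2k"
    and "admissible T mu nmax u n1 n2"
    and "master_solution eps w1 w2 L1 L2 O1 O2 V T uk n1k n2k r0 rk"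
    and "master_solution eps w1 w2 L1 L2 O1 O2 V T u n1 n2 r0 r"
    and "adjoint_solution eps w1 w2 L1 L2 O1 O2 V T uk n1k n2k rtarget xk"
    and "adjoint_solution eps w1 w2 L1 L2 O1 O2 V T u n1 n2 rtarget x"
  shows "((\<lambda>t. K_pair eps L1 L2 O1 O2 V (xk t) (r t)
                 (u t - uk t) (n1 t - n1k t) (n2 t - n2k t))
            has_integral (J1_of T r rtarget - J1_of T rk rtarget)) {0..T}
       \<and> ((\<lambda>t. K_pair eps L1 L2 O1 O2 V (x t) (rk t)
                 (u t - uk t) (n1 t - n1k t) (n2 t - n2k t))
            has_integral (J1_of T r rtarget - J1_of T rk rtarget)) {0..T}"
proof -
  have ht: "hermitian4 rtarget" using assms(13) by (simp add: density4_def)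
  have xT: "xk T = rtarget" "x T = rtarget" "r 0 = r0" "rk 0 = r0"
    using assms(16-19) by (auto simp: master_solution_def adjoint_solution_def)
  note i1 = ftc[OF assms(8,9,17,18)]
  note i2 = ftc[OF assms(8,9,16,18)]
  note i3 = ftc[OF assms(8,9,16,19)]
  note i4 = ftc[OF assms(8,9,17,19)]
  have z: "K_pair eps L1 L2 O1 O2 V X R 0 0 0 = 0" for X R by (simp add: K_pair_def)
  have e2: "hs_inner (xk T) (rk T) - hs_inner (xk 0) (rk 0) = 0"
    using has_integral_unique[OF i2[unfolded diff_self z] has_integral_0] by simp
  have e4: "hs_inner (x T) (r T) - hs_inner (x 0) (r 0) = 0"
    using has_integral_unique[OF i4[unfolded diff_self z] has_integral_0] by simp
  have J: "J1_of T r rtarget = hs_inner (x T) (r T)" "J1_of T rk rtarget = hs_inner (xk T) (rk T)"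
    "J1_of T r rtarget = hs_inner (xk T) (r T)" "J1_of T rk rtarget = hs_inner (x T) (rk T)"
    using xT ht by (simp_all add: J1_of_def hs_target)
  have A: "J1_of T r rtarget - J1_of T rk rtarget = hs_inner (xk T) (r T) - hs_inner (xk 0) (r 0)"
    using J e2 xT by (simp add: algebra_simps)
  have "J1_of T r rtarget - J1_of T rk rtarget
     = - (hs_inner (x T) (rk T) - hs_inner (x 0) (rk 0))"
    using J e4 xT by (simp add: algebra_simps)
  moreover have "K_pair eps L1 L2 O1 O2 V X R (- a) (- b) (- c) = - K_pair eps L1 L2 O1 O2 V X R a b c"
    for X R a b c by (simp add: K_pair_def algebra_simps)
  ultimately have B: "J1_of T r rtarget - J1_of T rk rtarget
     = - (hs_inner (x T) (rk T) - hs_inner (x 0) (rk 0))" and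
     N: "\<And>X R a b c. K_pair eps L1 L2 O1 O2 V X R (- a) (- b) (- c) = - K_pair eps L1 L2 O1 O2 V X R a b c" by auto
  have i3': "((\<lambda>t. K_pair eps L1 L2 O1 O2 V (x t) (rk t) (u t - uk t) (n1 t - n1k t) (n2 t - n2k t))
     has_integral (- (hs_inner (x T) (rk T) - hs_inner (x 0) (rk 0)))) {0..T}"
    using has_integral_neg[OF i3] by (simp add: N[symmetric] minus_diff_eq)
  show ?thesis
    using i1 i3' unfolding A[symmetric] B[symmetric] by blast
qed

end
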